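(* Assume the setting of the context and suppose Assumption (A4) holds. Let $c_1$ be the constant of the lower bound $d_{G^n}(x,y)\ge c_1\alpha(n)d_E(x,y)$ in (A4)(a). Then for every $r,\varepsilon>0$ there exist a finite set $\mathcal{X}\subseteq\overline{B}_F(\rho,r/c_1)\cap F^*$ and an integer $n_0$ such that $(B_{G^n}(g_n(x),\alpha(n)\varepsilon))_{x\in\mathcal{X}}$ is a cover of $B_{G^n}(\rho,\alpha(n)r)$ whenever $n\geq n_0$.
   Context: Let $(E,d_E)$ be a metric space and $F\subseteq E$ such that $F\cap\overline{B}_E(x,r)$ is compact for all $x\in E$, $r>0$ ($\overline{B}_E$, $B_E$ closed and open balls in $E$). Let $d_F:=d_E|_{F\times F}$, $B_F(x,r)$, $\overline{B}_F(x,r)$ open and closed balls in $(F,d_F)$, and $\rho\in F$. For a locally finite connected graph $G$ with at least two vertices: $d_G$ is the shortest-path metric, $B_G(x,r)$ the open $d_G$-ball; $\mu^G$ a symmetric weight with $\mu^G_{xy}>0$ iff $\{x,y\}$ is an edge; $X^G$ the discrete time simple random walk with $P_G(x,y)=\mu^G_{xy}/\sum_z\mu^G_{xz}$; generator $\mathcal{L}_Gf(x)=\sum_yP_G(x,y)(f(y)-f(x))$. Parabolic Harnack inequality (PHI): with $Q_G(x,R,T):=[0,T]\times B_G(x,R)$, $Q^-_G:=[\frac14T,\frac12T]\times B_G(x,\frac12R)$, $Q^+_G:=[\frac34T,T)\times B_G(x,\frac12R)$, a function $u$ on $([0,T]\cap\mathbb{Z})\times B_G(x,R+1)$ is caloric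 on $Q_G(x,R,T)$ if $u(n+1,y)-u(n,y)=\mathcal{L}_Gu(n,y)$ for integers $0\le n\le T-1$, $y\in B_G(x,R)$; PHI with constant $C_H$ holds for $Q_G(x,R,T)$ if every non-negative caloric $u$ on it satisfies $\sup_{Q^-_G}\hat u\le C_H\inf_{Q^+_G}\hat u$, $\hat u(n,y):=u(n+1,y)+u(n,y)$. $(G^n)_{n\ge1}$ are such graphs with $V(G^n)\subseteq E$ and distinguished vertex $\rho$. $(\alpha(n)),(\gamma(n))$ are non-negative sequences diverging to $\infty$. For $x\in E$, $g_n(x)$ is a point of $V(G^n)$ minimising $d_E(x,\cdot)$. Assumption (A4): for some $\kappa\ge2$ and $C_H<\infty$: (a) there is $c_1>0$ with $d_{G^n}(x,y)\ge c_1\alpha(n)d_E(x,y)$ for all $x,y\in V(G^n)$, $n\ge1$, and a non-negative $\tilde\alpha(n)=o(\alpha(n))$ such that for each $r>0$ there are $c_2<\infty$, $n_0$ with $d_{G^n}(x,y)\le c_2\alpha(n)d_E(x,y)+\tilde\alpha(n)$ for all $x,y\in V(G^n)\cap B_E(\rho,r)$, $n\ge n_0$; (b) for every $r>0$, $V(G^n)\cap\overline{B}_E(\rho,r)\to\overline{B}_F(\rho,r)$ in the Hausdorff topology on non-empty compact subsets of $(E,d_E)$; (c) for every $x\in V(G^n)$, $n\ge1$, there is a positive integer $s_{G^n}(x)$ such that PHI with constant $C_H$ holds for $Q_{G^n}(x,R,R^\kappa)$ for all $R\ge s_{G^n}(x)$, and there is a dense subset $F^*\subseteq F$ with $\alpha(n)^{-1}s_{G^n}(g_n(x))\to0$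 for every $x\in F^*$; (d) $\alpha(n)^\kappa=O(\gamma(n))$. *)

theory Defs
  imports "HOL-Analysis.Analysis" "HOL-Library.Landau_Symbols"
begin

definition hausdorff_dist :: "'a::metric_space set \<Rightarrow> 'a set \<Rightarrow> real" where
  "hausdorff_dist A B = max (SUP a\<in>A. infdist a B) (SUP b\<in>B. infdist b A)"

definition hausdorff_converges :: "(nat \<Rightarrow> 'a::metric_space set) \<Rightarrow> 'a set \<Rightarrow> bool" where
  "hausdorff_converges A B \<longleftrightarrow>
     (\<forall>n. compact (A n) \<and> A n \<noteq> {}) \<and> compact B \<and> B \<noteq> {} \<and>
     (\<lambda>n. hausdorff_dist (A n) B) \<longlonglongrightarrow> 0"

definition walk :: "('a \<Rightarrow> 'a \<Rightarrow> bool) \<Rightarrow> 'a list \<Rightarrow> bool" where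
  "walk Adj xs \<longleftrightarrow> xs \<noteq> [] \<and> (\<forall>i. Suc i < length xs \<longrightarrow> Adj (xs ! i) (xs ! Suc i))"

definition lf_connected_graph :: "'a set \<Rightarrow> ('a \<Rightarrow> 'a \<Rightarrow> bool) \<Rightarrow> bool" where
  "lf_connected_graph V Adj \<longleftrightarrow>
     (\<forall>x y. Adj x y \<longrightarrow> x \<in> V \<and> y \<in> V) \<and>
     (\<forall>x y. Adj x y \<longrightarrow> Adj y x) \<and>
     (\<forall>x. \<not> Adj x x) \<and>
     (\<forall>x\<in>V. finite {y. Adj x y}) \<and>
     (\<forall>x\<in>V. \<forall>y\<in>V. \<exists>xs. walk Adj xs \<and> hd xs = x \<and> last xs = y) \<and>
     (\<exists>x\<in>V. \<exists>y\<in>V. x \<noteq> y)"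

definition gdist :: "('a \<Rightarrow> 'a \<Rightarrow> bool) \<Rightarrow> 'a \<Rightarrow> 'a \<Rightarrow> nat" where
  "gdist Adj x y = (LEAST k. \<exists>xs. walk Adj xs \<and> hd xs = x \<and> last xs = y \<and> length xs = Suc k)"

definition gball :: "'a set \<Rightarrow> ('a \<Rightarrow> 'a \<Rightarrow> bool) \<Rightarrow> 'a \<Rightarrow> real \<Rightarrow> 'a set" where
  "gball V Adj x R = {y \<in> V. real (gdist Adj x y) < R}"

definition edge_weight :: "('a \<Rightarrow> 'a \<Rightarrow> bool) \<Rightarrow> ('a \<Rightarrow> 'a \<Rightarrow> real) \<Rightarrow> bool" where
  "edge_weight Adj mu \<longleftrightarrow> (\<forall>x y. mu x y = mu y x) \<and> (\<forall>x y. 0 \<le> mu x y)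
      \<and> (\<forall>x y. 0 < mu x y \<longleftrightarrow> Adj x y)"

definition trans_prob :: "('a \<Rightarrow> 'a \<Rightarrow> bool) \<Rightarrow> ('a \<Rightarrow> 'a \<Rightarrow> real) \<Rightarrow> 'a \<Rightarrow> 'a \<Rightarrow> real" where
  "trans_prob Adj mu x y = mu x y / (\<Sum>z\<in>{z. Adj x z}. mu x z)"

definition generator :: "('a \<Rightarrow> 'a \<Rightarrow> bool) \<Rightarrow> ('a \<Rightarrow> 'a \<Rightarrow> real) \<Rightarrow> ('a \<Rightarrow> real) \<Rightarrow> 'a \<Rightarrow> real" where
  "generator Adj mu f x = (\<Sum>y\<in>{y. Adj x y}. trans_prob Adj mu x y * (f y - f x))"

definition caloric ::
  "'a set \<Rightarrow> ('a \<Rightarrow> 'a \<Rightarrow> bool) \<Rightarrow> ('a \<Rightarrow> 'a \<Rightarrow> real) \<Rightarrow> 'a \<Rightarrow> real \<Rightarrow> real \<Rightarrow> (nat \<Rightarrow> 'a \<Rightarrow> real) \<Rightarrow> bool" where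
  "caloric V Adj mu x R T u \<longleftrightarrow>
     (\<forall>n::nat. \<forall>y. real n \<le> T - 1 \<and> y \<in> gball V Adj x R \<longrightarrow>
        u (Suc n) y - u n y = generator Adj mu (u n) y)"

text \<open>The function u is only
  meaningful on the domain ([0,T] \<inter> Z) x B(x,R+1); non-negativity is required there.
  The inequality sup over Q- of hat u <= CH * inf over Q+ of hat u is written pointwise,
  where hat u(n,y) = u(n+1,y) + u(n,y); only times n with n+1 in [0,T] are used (so that
  hat u(n,y) is defined).\<close>
definition PHI ::
  "'a set \<Rightarrow> ('a \<Rightarrow> 'a \<Rightarrow> bool) \<Rightarrow> ('a \<Rightarrow> 'a \<Rightarrow> real) \<Rightarrow> real \<Rightarrow> 'a \<Rightarrow> real \<Rightarrow> real \<Rightarrow> bool" where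
  "PHI V Adj mu CH x R T \<longleftrightarrow>
     (\<forall>u. (\<forall>n::nat. \<forall>y. real n \<le> T \<and> y \<in> gball V Adj x (R + 1) \<longrightarrow> 0 \<le> u n y) \<and>
          caloric V Adj mu x R T u \<longrightarrow>
        (\<forall>n m :: nat. \<forall>y z.
           T / 4 \<le> real n \<and> real n \<le> T / 2 \<and> real n + 1 \<le> T \<and> y \<in> gball V Adj x (R / 2) \<and>
           3 * T / 4 \<le> real m \<and> real m < T \<and> real m + 1 \<le> T \<and> z \<in> gball V Adj x (R / 2) \<longrightarrow>
           u (Suc n) y + u n y \<le> CH * (u (Suc m) z + u m z)))"

end

theory Submission
  imports Defs
begin


lemma infdist_lessE:
  assumes "A \<noteq> {}" "infdist x A < e"
  shows "\<exists>a\<in>A. dist x a < e"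
proof (rule ccontr)
  assume "\<not> ?thesis"
  then have "\<forall>a\<in>A. e \<le> dist x a" by auto
  then have "e \<le> infdist x A" unfolding infdist_notempty[OF assms(1)]
    by (intro cINF_greatest assms(1)) auto
  then show False using assms(2) by simp
qed

lemma hd_le1:
  fixes A B :: "'a::metric_space set"
  assumes "compact A" "compact B" "A \<noteq> {}" "B \<noteq> {}" "a \<in> A"
  shows "infdist a B \<le> hausdorff_dist A B"
proof -
  have "compact ((\<lambda>a. infdist a B) ` A)"
    by (intro compact_continuous_image continuous_on_infdist continuous_on_id assms)
  then have "bdd_above ((\<lambda>a. infdist a B) ` A)"
    by (intro bounded_imp_bdd_above compact_imp_bounded)
  then have "infdist a B \<le> (SUP a\<in>A. infdist a B)" by (intro cSUP_upper assms)
  then show ?thesis unfolding hausdorff_dist_def by simp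
qed

lemma hd_le2:
  fixes A B :: "'a::metric_space set"
  assumes "compact A" "compact B" "A \<noteq> {}" "B \<noteq> {}" "b \<in> B"
  shows "infdist b A \<le> hausdorff_dist A B"
proof -
  have "compact ((\<lambda>a. infdist a A) ` B)"
    by (intro compact_continuous_image continuous_on_infdist continuous_on_id assms)
  then have "bdd_above ((\<lambda>a. infdist a A) ` B)"
    by (intro bounded_imp_bdd_above compact_imp_bounded)
  then have "infdist b A \<le> (SUP a\<in>B. infdist a A)" by (intro cSUP_upper assms)
  then show ?thesis unfolding hausdorff_dist_def by simp
qed

lemma walk_take:
  assumes "walk Adj xs" "j < length xs"
  shows "walk Adj (take (Suc j) xs) \<and> hd (take (Suc j) xs) = hd xs \<and>
         last (take (Suc j) xs) = xs ! j \<and> length (take (Suc j) xs) = Suc j"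
  using assms unfolding walk_def
  apply (auto simp: hd_take last_conv_nth min_def)
  by (subgoal_tac "length xs = Suc j") auto

lemma walk_drop:
  assumes "walk Adj xs" "j < length xs"
  shows "walk Adj (drop j xs) \<and> hd (drop j xs) = xs ! j \<and>
         last (drop j xs) = last xs \<and> length (drop j xs) = length xs - j"
  using assms unfolding walk_def
  by (auto simp: hd_drop_conv_nth)

lemma gdist_le:
  assumes "walk Adj xs" "hd xs = x" "last xs = y" "length xs = Suc k"
  shows "gdist Adj x y \<le> k"
  unfolding gdist_def using assms by (intro Least_le) blast

lemma gdist_walk:
  assumes "\<exists>xs. walk Adj xs \<and> hd xs = x \<and> last xs = y"
  shows "\<exists>xs. walk Adj xs \<and> hd xs = x \<and> last xs = y \<and> length xs = Suc (gdist Adj x y)"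
proof -
  from assms obtain xs where xs: "walk Adj xs" "hd xs = x" "last xs = y" by blast
  then have "length xs = Suc (length xs - 1)" unfolding walk_def by (cases xs) auto
  with xs have "\<exists>k xs. walk Adj xs \<and> hd xs = x \<and> last xs = y \<and> length xs = Suc k" by blast
  from LeastI_ex[OF this] show ?thesis unfolding gdist_def by blast
qed

theorem lemma3p3:
  fixes F Fstar :: "'a::metric_space set"
    and \<rho> :: 'a
    and V :: "nat \<Rightarrow> 'a set"
    and Adj :: "nat \<Rightarrow> 'a \<Rightarrow> 'a \<Rightarrow> bool"
    and mu :: "nat \<Rightarrow> 'a \<Rightarrow> 'a \<Rightarrow> real"
    and \<alpha> \<gamma> \<alpha>t :: "nat \<Rightarrow> real"
    and g :: "nat \<Rightarrow> 'a \<Rightarrow> 'a"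
    and s :: "nat \<Rightarrow> 'a \<Rightarrow> nat"
    and \<kappa> CH c1 :: real
  assumes F_loc_compact: "\<And>x r. r > 0 \<Longrightarrow> compact (F \<inter> cball x r)"
    and rho_F: "\<rho> \<in> F"
    and graphs: "\<And>n. n \<ge> 1 \<Longrightarrow> lf_connected_graph (V n) (Adj n)"
    and weights: "\<And>n. n \<ge> 1 \<Longrightarrow> edge_weight (Adj n) (mu n)"
    and rho_vertex: "\<And>n. n \<ge> 1 \<Longrightarrow> \<rho> \<in> V n"
    and alpha_nonneg: "\<And>n. 0 \<le> \<alpha> n" and alpha_lim: "filterlim \<alpha> at_top sequentially"
    and gamma_nonneg: "\<And>n. 0 \<le> \<gamma> n" and gamma_lim: "filterlim \<gamma> at_top sequentially"
    and g_def: "\<And>n x. n \<ge> 1 \<Longrightarrow> g n x \<in> V n \<and> (\<forall>y\<in>V n. dist x (g n x) \<le> dist x y)"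
    \<comment> \<open>Assumption (A4)\<close>
    and kappa: "\<kappa> \<ge> 2"
    \<comment> \<open>(a)\<close>
    and c1_pos: "c1 > 0"
    and lower: "\<And>n x y. n \<ge> 1 \<Longrightarrow> x \<in> V n \<Longrightarrow> y \<in> V n \<Longrightarrow>
                  real (gdist (Adj n) x y) \<ge> c1 * \<alpha> n * dist x y"
    and alphat_nonneg: "\<And>n. 0 \<le> \<alpha>t n"
    and alphat_small: "\<alpha>t \<in> o(\<alpha>)"
    and upper: "\<And>r. r > 0 \<Longrightarrow> \<exists>c2 n0. \<forall>n\<ge>n0. n \<ge> 1 \<longrightarrow>
                  (\<forall>x\<in>V n \<inter> ball \<rho> r. \<forall>y\<in>V n \<inter> ball \<rho> r.
                     real (gdist (Adj n) x y) \<le> c2 * \<alpha> n * dist x y + \<alpha>t n)"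
    \<comment> \<open>(b)\<close>
    and hausdorff: "\<And>r. r > 0 \<Longrightarrow>
                  hausdorff_converges (\<lambda>n. V (Suc n) \<inter> cball \<rho> r) (F \<inter> cball \<rho> r)"
    \<comment> \<open>(c)\<close>
    and s_pos: "\<And>n x. n \<ge> 1 \<Longrightarrow> x \<in> V n \<Longrightarrow> s n x \<ge> 1"
    and phi: "\<And>n x R. n \<ge> 1 \<Longrightarrow> x \<in> V n \<Longrightarrow> R \<ge> real (s n x) \<Longrightarrow>
                  PHI (V n) (Adj n) (mu n) CH x R (R powr \<kappa>)"
    and Fstar_sub: "Fstar \<subseteq> F" and Fstar_dense: "F \<subseteq> closure Fstar"
    and s_small: "\<And>x. x \<in> Fstar \<Longrightarrow> (\<lambda>n. real (s n (g n x)) / \<alpha> n) \<longlonglongrightarrow> 0"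
    \<comment> \<open>(d)\<close>
    and alpha_gamma: "(\<lambda>n. \<alpha> n powr \<kappa>) \<in> O(\<gamma>)"
  shows "\<forall>r>0. \<forall>\<epsilon>>0. \<exists>X. finite X \<and> X \<subseteq> F \<inter> cball \<rho> (r / c1) \<inter> Fstar \<and>
           (\<exists>n0\<ge>1. \<forall>n\<ge>n0.
              gball (V n) (Adj n) \<rho> (\<alpha> n * r) \<subseteq> (\<Union>x\<in>X. gball (V n) (Adj n) (g n x) (\<alpha> n * \<epsilon>)))"
proof (intro allI impI)
  fix r \<epsilon> :: real
  assume r: "r > 0" and e: "\<epsilon> > 0"
  define R0 where "R0 = r / c1"
  have R0: "R0 > 0" using r c1_pos by (simp add: R0_def)
  have R0c: "c1 * R0 = r" using c1_pos by (simp add: R0_def)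
  obtain c2 N2 where up: "\<forall>n\<ge>N2. n \<ge> 1 \<longrightarrow>
      (\<forall>x\<in>V n \<inter> ball \<rho> (R0+R0+1). \<forall>y\<in>V n \<inter> ball \<rho> (R0+R0+1).
         real (gdist (Adj n) x y) \<le> c2 * \<alpha> n * dist x y + \<alpha>t n)"
    using upper[of "R0+R0+1"] R0 by auto
  define C2 where "C2 = max c2 1"
  have C2: "C2 > 0" "c2 \<le> C2" by (auto simp: C2_def)
  define \<delta> where "\<delta> = min (R0/2) (\<epsilon>/(4*C2))"
  have d0: "\<delta> > 0" using R0 e C2 by (simp add: \<delta>_def)
  have d1: "\<delta> \<le> R0/2" by (simp add: \<delta>_def)
  have "\<delta> \<le> \<epsilon>/(4*C2)" by (simp add: \<delta>_def)
  then have d2: "C2 * \<delta> \<le> \<epsilon>/4" using C2 by (simp add: field_simps)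
  define K where "K = F \<inter> cball \<rho> R0"
  have Kc: "compact K" unfolding K_def using F_loc_compact R0 by blast
  have Kne: "K \<noteq> {}" using rho_F R0 by (auto simp: K_def)
  obtain T where T: "T \<subseteq> K" "finite T" "K \<subseteq> (\<Union>t\<in>T. ball t (\<delta>/8))"
    using compactE_image[OF Kc, of K "\<lambda>t. ball t (\<delta>/8)"] d0 by force
  define G where "G = {z\<in>T. dist \<rho> z < R0 - \<delta>/4}"
  have "\<forall>z\<in>G. \<exists>x\<in>Fstar. dist x z < \<delta>/8"
  proof
    fix z assume "z \<in> G"
    then have "z \<in> closure Fstar" using T Fstar_dense by (auto simp: G_def K_def)
    then have "\<forall>e>0. \<exists>x\<in>Fstar. dist x z < e" using closure_approachable by blast
    then show "\<exists>x\<in>Fstar. dist x z < \<delta>/8" using d0 by (metis divide_pos_pos zero_less_numeral)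
  qed
  then obtain xf where xf: "\<And>z. z \<in> G \<Longrightarrow> xf z \<in> Fstar \<and> dist (xf z) z < \<delta>/8" by metis
  define X where "X = xf ` G"
  have Xfin: "finite X" using T by (simp add: X_def G_def)
  have Xsub: "X \<subseteq> F \<inter> cball \<rho> (r / c1) \<inter> Fstar"
  proof
    fix x assume "x \<in> X"
    then obtain z where z: "z \<in> G" "x = xf z" by (auto simp: X_def)
    have "dist \<rho> x \<le> dist \<rho> z + dist x z" by (simp add: dist_triangle2)
    then have "dist \<rho> x \<le> R0" using xf[OF z(1)] z d0 by (auto simp: G_def)
    then show "x \<in> F \<inter> cball \<rho> (r / c1) \<inter> Fstar" using xf[OF z(1)] z Fstar_sub
      by (auto simp: R0_def)
  qed
  have hc: "hausdorff_converges (\<lambda>n. V (Suc n) \<inter> cball \<rho> R0) K"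
    using hausdorff[OF R0] by (simp add: K_def)
  have Acomp: "\<And>n. n \<ge> 1 \<Longrightarrow> compact (V n \<inter> cball \<rho> R0) \<and> V n \<inter> cball \<rho> R0 \<noteq> {}"
  proof -
    fix n :: nat assume "n \<ge> 1"
    then have "n = Suc (n - 1)" by simp
    then show "compact (V n \<inter> cball \<rho> R0) \<and> V n \<inter> cball \<rho> R0 \<noteq> {}"
      using hc unfolding hausdorff_converges_def by metis
  qed
  have ev1: "eventually (\<lambda>n. \<alpha> n \<ge> 2/(c1*\<delta>) + 1) sequentially"
    using alpha_lim by (simp add: filterlim_at_top)
  have ev2: "eventually (\<lambda>n. norm (\<alpha>t n) \<le> (\<epsilon>/4) * norm (\<alpha> n)) sequentially"
    using landau_o.smallD[OF alphat_small, of "\<epsilon>/4"] e by simp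
  have "(\<lambda>n. hausdorff_dist (V (Suc n) \<inter> cball \<rho> R0) K) \<longlonglongrightarrow> 0"
    using hc unfolding hausdorff_converges_def by blast
  then have "eventually (\<lambda>n. hausdorff_dist (V (Suc n) \<inter> cball \<rho> R0) K < \<delta>/8) sequentially"
    using d0 by (intro order_tendstoD(2)) auto
  then have ev3: "eventually (\<lambda>n. hausdorff_dist (V n \<inter> cball \<rho> R0) K < \<delta>/8) sequentially"
    using eventually_sequentially_Suc[where P="\<lambda>n. hausdorff_dist (V n \<inter> cball \<rho> R0) K < \<delta>/8"] by blast
  have ev4: "eventually (\<lambda>n. n \<ge> max N2 1) sequentially" by (rule eventually_ge_at_top)
  have "eventually (\<lambda>n. \<alpha> n \<ge> 2/(c1*\<delta>) + 1 \<and> norm (\<alpha>t n) \<le> (\<epsilon>/4) * norm (\<alpha> n) \<and>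
        hausdorff_dist (V n \<inter> cball \<rho> R0) K < \<delta>/8 \<and> n \<ge> max N2 1) sequentially"
    using ev1 ev2 ev3 ev4 by (intro eventually_conj)
  then obtain N where N: "\<And>n. n \<ge> N \<Longrightarrow> \<alpha> n \<ge> 2/(c1*\<delta>) + 1 \<and> norm (\<alpha>t n) \<le> (\<epsilon>/4) * norm (\<alpha> n) \<and>
        hausdorff_dist (V n \<inter> cball \<rho> R0) K < \<delta>/8 \<and> n \<ge> max N2 1"
    unfolding eventually_sequentially by blast
  have cover: "gball (V n) (Adj n) \<rho> (\<alpha> n * r) \<subseteq> (\<Union>x\<in>X. gball (V n) (Adj n) (g n x) (\<alpha> n * \<epsilon>))"
    if n: "n \<ge> N" for n
  proof
    fix y assume y: "y \<in> gball (V n) (Adj n) \<rho> (\<alpha> n * r)"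
    have a1: "\<alpha> n \<ge> 2/(c1*\<delta>) + 1" and a2: "norm (\<alpha>t n) \<le> (\<epsilon>/4) * norm (\<alpha> n)"
      and a3: "hausdorff_dist (V n \<inter> cball \<rho> R0) K < \<delta>/8" and a4: "n \<ge> max N2 1"
      using N[OF n] by auto
    have n1: "n \<ge> 1" using a4 by simp
    have cd: "c1 * \<delta> > 0" using c1_pos d0 by simp
    have "2/(c1*\<delta>) > 0" using cd by simp
    then have apos: "\<alpha> n > 0" using a1 by linarith
    define D where "D = c1 * \<alpha> n"
    have Dpos: "D > 0" using c1_pos apos by (simp add: D_def)
    have "2/(c1*\<delta>) \<le> \<alpha> n" using a1 by linarith
    then have "2 \<le> \<alpha> n * (c1 * \<delta>)" using cd by (simp add: field_simps)
    then have Dd: "2 \<le> D * \<delta>" by (simp add: D_def algebra_simps)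
    have atb: "\<alpha>t n \<le> (\<epsilon>/4) * \<alpha> n" using a2 alphat_nonneg[of n] apos by simp
    have yV: "y \<in> V n" and yk: "real (gdist (Adj n) \<rho> y) < \<alpha> n * r"
      using y by (auto simp: gball_def)
    have lf: "lf_connected_graph (V n) (Adj n)" using graphs n1 .
    have rV: "\<rho> \<in> V n" using rho_vertex n1 .
    define k where "k = gdist (Adj n) \<rho> y"
    obtain xs where xs: "walk (Adj n) xs" "hd xs = \<rho>" "last xs = y" "length xs = Suc k"
      using gdist_walk[of "Adj n" \<rho> y] lf rV yV unfolding lf_connected_graph_def k_def by blast
    have lowk: "D * dist \<rho> y \<le> k" using lower[OF n1 rV yV] by (simp add: D_def k_def)
    have "D * R0 = \<alpha> n * r" using R0c by (simp add: D_def algebra_simps)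
    then have kr: "real k < D * R0" using yk by (simp add: k_def)
    have "\<exists>v\<in>V n. dist \<rho> v \<le> R0 - \<delta>/2 \<and> dist v y \<le> \<delta>"
    proof -
      define m where "m = nat \<lfloor>D * \<delta>\<rfloor>"
      have m1: "real m \<le> D * \<delta>" using Dpos d0 by (simp add: m_def)
      have m2: "real m > D * \<delta> - 1" using Dpos d0 unfolding m_def by linarith
      show ?thesis
      proof (cases "k \<le> m")
        case True
        have "D * dist \<rho> y \<le> D * \<delta>" using lowk True m1 by linarith
        then have "dist \<rho> y \<le> \<delta>" using Dpos by simp
        then show ?thesis using rV d1 d0 by (intro bexI[of _ \<rho>]) auto
      next
        case False
        define j where "j = k - m"
        have "real m > 1" using m2 Dd by linarith
        then have "m \<ge> 1" by simp
        then have jl: "j < length xs" "Suc j < length xs" using False xs(4) by (auto simp: j_def)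
        have vV: "xs ! j \<in> V n" using xs(1) jl lf unfolding walk_def lf_connected_graph_def by blast
        have g1: "gdist (Adj n) \<rho> (xs ! j) \<le> j"
          using walk_take[OF xs(1) jl(1)] xs(2) by (intro gdist_le[of _ "take (Suc j) xs"]) auto
        have g2: "gdist (Adj n) (xs ! j) y \<le> m"
          using walk_drop[OF xs(1) jl(1)] xs False by (intro gdist_le[of _ "drop j xs"]) (auto simp: j_def)
        have l1: "D * dist \<rho> (xs ! j) \<le> j"
          using lower[OF n1 rV vV] g1 by (simp add: D_def)
        have l2: "D * dist (xs ! j) y \<le> m"
          using lower[OF n1 vV yV] g2 by (simp add: D_def)
        have "real j = real k - real m" using False by (simp add: j_def)
        then have "D * dist \<rho> (xs ! j) \<le> D * (R0 - \<delta>/2)"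
          using l1 kr m2 Dd by (simp add: algebra_simps)
        then have "dist \<rho> (xs ! j) \<le> R0 - \<delta>/2" using Dpos by simp
        moreover have "D * dist (xs ! j) y \<le> D * \<delta>" using l2 m1 by linarith
        then have "dist (xs ! j) y \<le> \<delta>" using Dpos by simp
        ultimately show ?thesis using vV by blast
      qed
    qed
    then obtain v where v: "v \<in> V n" "dist \<rho> v \<le> R0 - \<delta>/2" "dist v y \<le> \<delta>" by blast
    have Ac: "compact (V n \<inter> cball \<rho> R0)" "V n \<inter> cball \<rho> R0 \<noteq> {}" using Acomp[OF n1] by auto
    have vA: "v \<in> V n \<inter> cball \<rho> R0" using v d0 by auto
    have "infdist v K < \<delta>/8" using hd_le1[OF Ac(1) Kc Ac(2) Kne vA] a3 by linarith
    then obtain z where z: "z \<in> K" "dist v z < \<delta>/8" using infdist_lessE[OF Kne] by blast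
    obtain t where t: "t \<in> T" "dist t z < \<delta>/8" using T(3) z(1) by auto
    have "dist \<rho> t \<le> dist \<rho> v + dist v z + dist t z"
      using dist_triangle[of \<rho> t v] dist_triangle[of v t z] dist_commute[of t z] by linarith
    then have tG: "t \<in> G" using v z t by (auto simp: G_def)
    define x where "x = xf t"
    have xX: "x \<in> X" using tG by (simp add: X_def x_def)
    have xt: "dist x t < \<delta>/8" using xf[OF tG] by (simp add: x_def)
    have "x \<in> F \<inter> cball \<rho> (r / c1)" using Xsub xX by auto
    then have xK: "x \<in> K" by (simp add: K_def R0_def)
    have "infdist x (V n \<inter> cball \<rho> R0) < \<delta>/8" using hd_le2[OF Ac(1) Kc Ac(2) Kne xK] a3 by linarith
    then obtain w where w: "w \<in> V n \<inter> cball \<rho> R0" "dist x w < \<delta>/8" using infdist_lessE[OF Ac(2)] by blast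
    have gx: "g n x \<in> V n" "dist x (g n x) \<le> dist x w" using g_def[OF n1, of x] w by auto
    have dgy: "dist (g n x) y < 2 * \<delta>"
    proof -
      have "dist (g n x) y \<le> dist x (g n x) + dist x t + dist t z + dist v z + dist v y"
        using dist_triangle[of "g n x" y x] dist_triangle[of x y t] dist_triangle[of t y z]
          dist_triangle[of z y v] dist_commute[of "g n x" x] dist_commute[of z v] by linarith
      then show ?thesis using gx w xt t z v d0 by linarith
    qed
    have "dist \<rho> (g n x) \<le> dist \<rho> x + dist x (g n x)" by (rule dist_triangle)
    moreover have "dist \<rho> x \<le> R0" using xK by (simp add: K_def)
    ultimately have "dist \<rho> (g n x) < R0+R0+1" using gx(2) w(2) d1 d0 by linarith
    then have gB: "g n x \<in> V n \<inter> ball \<rho> (R0+R0+1)" using gx(1) by simp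
    have "dist \<rho> y \<le> dist \<rho> v + dist v y" by (rule dist_triangle)
    then have "dist \<rho> y < R0+R0+1" using v(2,3) d1 d0 by linarith
    then have yB: "y \<in> V n \<inter> ball \<rho> (R0+R0+1)" using yV by simp
    have "real (gdist (Adj n) (g n x) y) \<le> c2 * \<alpha> n * dist (g n x) y + \<alpha>t n"
    proof -
      have "N2 \<le> n" using a4 by simp
      then have "\<forall>x\<in>V n \<inter> ball \<rho> (R0+R0+1). \<forall>y\<in>V n \<inter> ball \<rho> (R0+R0+1).
         real (gdist (Adj n) x y) \<le> c2 * \<alpha> n * dist x y + \<alpha>t n" using up n1 by blast
      then show ?thesis using gB yB by blast
    qed
    also have "\<dots> \<le> C2 * \<alpha> n * dist (g n x) y + \<alpha>t n"
      using C2 apos by (intro add_right_mono mult_right_mono) auto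
    also have "\<dots> < C2 * \<alpha> n * (2 * \<delta>) + \<alpha>t n"
      using C2 apos dgy by (intro add_strict_right_mono mult_strict_left_mono) auto
    also have "\<dots> \<le> \<alpha> n * (\<epsilon>/2) + \<alpha> n * (\<epsilon>/4)"
    proof -
      have "C2 * \<alpha> n * (2 * \<delta>) = 2 * \<alpha> n * (C2 * \<delta>)" by simp
      also have "\<dots> \<le> 2 * \<alpha> n * (\<epsilon>/4)" using d2 apos by (intro mult_left_mono) auto
      finally show ?thesis using atb by simp
    qed
    also have "\<dots> < \<alpha> n * \<epsilon>" using apos e by (simp add: algebra_simps)
    finally have "y \<in> gball (V n) (Adj n) (g n x) (\<alpha> n * \<epsilon>)" using yV by (simp add: gball_def)
    then show "y \<in> (\<Union>x\<in>X. gball (V n) (Adj n) (g n x) (\<alpha> n * \<epsilon>))" using xX by blast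
  qed
  show "\<exists>X. finite X \<and> X \<subseteq> F \<inter> cball \<rho> (r / c1) \<inter> Fstar \<and>
           (\<exists>n0\<ge>1. \<forall>n\<ge>n0.
              gball (V n) (Adj n) \<rho> (\<alpha> n * r) \<subseteq> (\<Union>x\<in>X. gball (V n) (Adj n) (g n x) (\<alpha> n * \<epsilon>)))"
    using Xfin Xsub cover by (intro exI[of _ X] conjI exI[of _ "max N 1"]) auto
qed

end
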